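(* Let $D\subset\mathbb{R}^{n+1}$ be a domain with upper base $\gamma(D)$, and let $F=F(x,t,X):D\times\mathcal{S}_n\to\mathbb{R}$ satisfy, for constants $0<\lambda\le\Lambda$, $\lambda\,\mathrm{Tr}(N)\le F(x,t,M+N)-F(x,t,M)\le\Lambda\,\mathrm{Tr}(N)$ for all $(x,t)\in D$ and $M,N\in\mathcal{S}_n$ with $N\ge0$, and $F(x,t,0)=0$. Let $u$ be a continuous viscosity subsolution (resp. supersolution) of $F(x,t,D^2u)-\partial_tu=0$ in $D\cup\gamma(D)$ attaining its maximum (resp. minimum) $M$ over $D\cup\gamma(D)$ at some point $(x_0,t_0)\in D\cup\gamma(D)$ (no sign condition on $M$). Then $u\equiv M$ in the subdomain of $D$ subordinate to $(x_0,t_0)$, i.e. at every point of $D$ that can be joined to $(x_0,t_0)$ by a broken line lying in $D\cup\gamma(D)$ (except possibly at $(x_0,t_0)$), uniquely projected onto the $t$-axis and having $(x_0,t_0)$ as upper end-point.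
   Context: $\mathcal{S}_n$ is the space of real symmetric $n\times n$ matrices. Cylinders: $\mathbb{Q}^{t_1,t_2}_{x,R}=\{(y,s):|y-x|<R,\ t_1<s<t_2\}$. Upper base $\gamma(D)$: the set of points $(x,t)\in\partial D$ for which there is $h>0$ such that $\mathbb{Q}^{t-h,t}_{x,h}\subset D$ while $\mathbb{Q}^{t,t+h}_{x,h}$ lies outside $D$. A broken line is uniquely projected onto the $t$-axis if distinct points of it have distinct $t$-coordinates. *)

theory Defs
  imports "HOL-Analysis.Analysis"
begin

text \<open>Points of R^(n+1) are pairs (x,t) with x :: real^'n and t :: real.
  S_n is represented by the matrices X :: real^'n^'n with transpose X = X.\<close>

definition symmetric_mat :: "real^'n^'n \<Rightarrow> bool" where
  "symmetric_mat X \<longleftrightarrow> transpose X = X"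

definition psd :: "real^'n^'n \<Rightarrow> bool" where
  "psd N \<longleftrightarrow> (\<forall>v. v \<bullet> (N *v v) \<ge> 0)"

definition cyl :: "real \<Rightarrow> real \<Rightarrow> real^'n \<Rightarrow> real \<Rightarrow> ((real^'n) \<times> real) set" where
  "cyl t1 t2 x R = {(y,s). dist y x < R \<and> t1 < s \<and> s < t2}"

definition upper_base :: "((real^'n) \<times> real) set \<Rightarrow> ((real^'n) \<times> real) set" where
  "upper_base D = {(x,t). (x,t) \<in> frontier D \<and>
      (\<exists>h>0. cyl (t - h) t x h \<subseteq> D \<and> cyl t (t + h) x h \<inter> D = {})}"

definition test_fun ::
  "(real^'n \<Rightarrow> real \<Rightarrow> real) \<Rightarrow> (real^'n \<Rightarrow> real \<Rightarrow> real^'n) \<Rightarrow>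
   (real^'n \<Rightarrow> real \<Rightarrow> real^'n^'n) \<Rightarrow> (real^'n \<Rightarrow> real \<Rightarrow> real) \<Rightarrow>
   ((real^'n) \<times> real) \<Rightarrow> bool" where
  "test_fun \<phi> Dx Hx Dt p \<longleftrightarrow> (\<exists>U. open U \<and> p \<in> U \<and>
     (\<forall>(y,s)\<in>U.
        ((\<lambda>z. \<phi> z s) has_derivative (\<lambda>v. Dx y s \<bullet> v)) (at y) \<and>
        ((\<lambda>z. Dx z s) has_derivative (\<lambda>v. Hx y s *v v)) (at y) \<and>
        ((\<lambda>r. \<phi> y r) has_real_derivative Dt y s) (at s)) \<and>
     continuous_on U (\<lambda>(y,s). \<phi> y s) \<and>
     continuous_on U (\<lambda>(y,s). Dx y s) \<and>
     continuous_on U (\<lambda>(y,s). Hx y s) \<and>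
     continuous_on U (\<lambda>(y,s). Dt y s))"

definition visc_sub ::
  "(real^'n \<Rightarrow> real \<Rightarrow> real^'n^'n \<Rightarrow> real) \<Rightarrow> ((real^'n) \<times> real) set \<Rightarrow>
   ((real^'n) \<times> real \<Rightarrow> real) \<Rightarrow> bool" where
  "visc_sub F Om u \<longleftrightarrow> (\<forall>x0 t0 \<phi> Dx Hx Dt. (x0,t0) \<in> Om \<longrightarrow>
      test_fun \<phi> Dx Hx Dt (x0,t0) \<longrightarrow>
      (\<exists>r>0. \<forall>(y,s)\<in>Om \<inter> ball (x0,t0) r. u (y,s) - \<phi> y s \<le> u (x0,t0) - \<phi> x0 t0) \<longrightarrow>
      F x0 t0 (Hx x0 t0) - Dt x0 t0 \<ge> 0)"

definition visc_super ::
  "(real^'n \<Rightarrow> real \<Rightarrow> real^'n^'n \<Rightarrow> real) \<Rightarrow> ((real^'n) \<times> real) set \<Rightarrow>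
   ((real^'n) \<times> real \<Rightarrow> real) \<Rightarrow> bool" where
  "visc_super F Om u \<longleftrightarrow> (\<forall>x0 t0 \<phi> Dx Hx Dt. (x0,t0) \<in> Om \<longrightarrow>
      test_fun \<phi> Dx Hx Dt (x0,t0) \<longrightarrow>
      (\<exists>r>0. \<forall>(y,s)\<in>Om \<inter> ball (x0,t0) r. u (y,s) - \<phi> y s \<ge> u (x0,t0) - \<phi> x0 t0) \<longrightarrow>
      F x0 t0 (Hx x0 t0) - Dt x0 t0 \<le> 0)"

definition broken_line :: "('a::real_vector) list \<Rightarrow> 'a set" where
  "broken_line ps = set ps \<union> (\<Union>i<length ps - 1. closed_segment (ps ! i) (ps ! Suc i))"

definition subordinate :: "((real^'n) \<times> real) set \<Rightarrow> ((real^'n) \<times> real) \<Rightarrow> ((real^'n) \<times> real) set" where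
  "subordinate D p0 = {q \<in> D. \<exists>ps. ps \<noteq> [] \<and> hd ps = q \<and> last ps = p0 \<and>
      broken_line ps \<subseteq> D \<union> upper_base D \<and> inj_on snd (broken_line ps) \<and> snd q \<le> snd p0}"

end

theory Submission
  imports Defs
begin


definition outer :: "real^'n \<Rightarrow> real^'n^'n" where
  "outer w = (\<chi> i j. w$i * w$j)"

lemma outer_mult: "outer w *v v = (w \<bullet> v) *\<^sub>R w"
  by (simp add: outer_def matrix_vector_mult_def inner_vec_def vec_eq_iff sum_distrib_left sum_distrib_right mult_ac)

lemma sym_outer: "symmetric_mat (outer w)"
  by (simp add: symmetric_mat_def outer_def transpose_def vec_eq_iff mult.commute)

lemma psd_outer: "psd (outer w)"
  by (simp add: psd_def outer_mult inner_commute)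

lemma trace_outer: "trace (outer w) = w \<bullet> w"
  by (simp add: trace_def outer_def inner_vec_def)

lemma sym_scale: "symmetric_mat A \<Longrightarrow> symmetric_mat (c *\<^sub>R A)"
  by (simp add: symmetric_mat_def transpose_def vec_eq_iff)

lemma psd_scale: "psd A \<Longrightarrow> 0 \<le> c \<Longrightarrow> psd (c *\<^sub>R A)"
  by (simp add: psd_def flip: scaleR_matrix_vector_assoc)

lemma trace_scale: "trace (c *\<^sub>R (A::real^'n^'n)) = c * trace A"
  by (simp add: trace_def sum_distrib_left)

lemma sym_id: "symmetric_mat (mat 1)"
  by (simp add: symmetric_mat_def)

lemma psd_id: "psd (mat 1)"
  by (simp add: psd_def)

lemma sym_diff: "symmetric_mat A \<Longrightarrow> symmetric_mat B \<Longrightarrow> symmetric_mat (A - B)"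
  by (simp add: symmetric_mat_def transpose_def vec_eq_iff)

lemma sym_zero: "symmetric_mat 0"
  by (simp add: symmetric_mat_def transpose_def vec_eq_iff)

lemma pucci:
  fixes F :: "real^'n \<Rightarrow> real \<Rightarrow> real^'n^'n \<Rightarrow> real"
  assumes S: "\<forall>X N. symmetric_mat X \<longrightarrow> symmetric_mat N \<longrightarrow> psd N \<longrightarrow>
            lam * trace N \<le> F x t (X + N) - F x t X \<and> F x t (X + N) - F x t X \<le> Lam * trace N"
    and F0: "F x t 0 = 0" and c: "0 \<le> c" and k: "0 \<le> k"
  shows "F x t (c *\<^sub>R mat 1 - k *\<^sub>R outer w) \<le> Lam * c * CARD('n) - lam * k * (w \<bullet> w)"
proof -
  have sP: "symmetric_mat (c *\<^sub>R (mat 1::real^'n^'n))" by (simp add: sym_scale sym_id)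
  have pP: "psd (c *\<^sub>R (mat 1::real^'n^'n))" by (simp add: psd_scale psd_id c)
  have sN: "symmetric_mat (k *\<^sub>R outer w)" by (simp add: sym_scale sym_outer)
  have pN: "psd (k *\<^sub>R outer w)" by (simp add: psd_scale psd_outer k)
  have 1: "lam * trace (k *\<^sub>R outer w) \<le> F x t ((c *\<^sub>R mat 1 - k *\<^sub>R outer w) + k *\<^sub>R outer w) - F x t (c *\<^sub>R mat 1 - k *\<^sub>R outer w)"
    using S sym_diff[OF sP sN] sN pN by blast
  have 2: "F x t (0 + c *\<^sub>R mat 1) - F x t 0 \<le> Lam * trace (c *\<^sub>R (mat 1::real^'n^'n))"
    using S sym_zero sP pP by blast
  show ?thesis using 1 2 F0 by (simp add: trace_scale trace_outer trace_I)
qed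



lemma tf:
  fixes ys V :: "real^'n" and s0 al del L e0 eta be sc :: real
  defines "z \<equiv> \<lambda>s. ys + (s - s0) *\<^sub>R V"
  defines "E \<equiv> \<lambda>y s. exp (-al * ((y - z s) \<bullet> (y - z s)))"
  defines "a \<equiv> \<lambda>s. del * exp (-L * (s - s0))"
  shows "test_fun (\<lambda>y s. -(a s * (E y s - e0)) + eta * exp (be * (s - sc)))
     (\<lambda>y s. (2*al*a s*E y s) *\<^sub>R (y - z s))
     (\<lambda>y s. (2*al*a s*E y s) *\<^sub>R mat 1 - (4*al^2*a s*E y s) *\<^sub>R outer (y - z s))
     (\<lambda>y s. L*a s*(E y s - e0) - 2*al*a s*E y s*((y - z s) \<bullet> V) + eta*be*exp(be*(s-sc))) p"
  unfolding test_fun_def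
proof (intro exI[of _ UNIV] conjI ballI)
  fix q assume "q \<in> (UNIV::((real^'n)\<times>real) set)"
  obtain y s where q: "q = (y,s)" by fastforce
  have d1: "((\<lambda>x. -(a s * (E x s - e0)) + eta * exp (be * (s - sc))) has_derivative
      (\<lambda>v. ((2*al*a s*E y s) *\<^sub>R (y - z s)) \<bullet> v)) (at y)"
    unfolding E_def
    apply (rule derivative_eq_intros refl | simp)+
    by (simp add: fun_eq_iff inner_commute algebra_simps)
  have d2: "((\<lambda>x. (2*al*a s*E x s) *\<^sub>R (x - z s)) has_derivative
      (\<lambda>v. ((2*al*a s*E y s) *\<^sub>R mat 1 - (4*al^2*a s*E y s) *\<^sub>R outer (y - z s)) *v v)) (at y)"
    unfolding E_def
    apply (rule derivative_eq_intros refl | simp)+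
    apply (rule ext)
    apply (simp add: matrix_vector_mult_diff_rdistrib outer_mult inner_commute flip: scaleR_matrix_vector_assoc)
    by (simp add: power2_eq_square algebra_simps)
  have eqq: "\<And>r. (y - z r) \<bullet> (y - z r) = (y - ys) \<bullet> (y - ys) - 2*(r - s0)*((y - ys) \<bullet> V) + (r - s0)^2 * (V \<bullet> V)"
    unfolding z_def by (simp add: algebra_simps inner_diff_left inner_diff_right power2_eq_square inner_commute)
  have d3: "((\<lambda>r. -(a r * (E y r - e0)) + eta * exp (be * (r - sc))) has_real_derivative
      (L*a s*(E y s - e0) - 2*al*a s*E y s*((y - z s) \<bullet> V) + eta*be*exp(be*(s-sc)))) (at s)"
    unfolding E_def a_def eqq
    apply (rule derivative_eq_intros refl | simp)+
    by (simp add: z_def algebra_simps inner_diff_left inner_diff_right power2_eq_square inner_commute)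
  show "case q of (y, s) \<Rightarrow> ((\<lambda>x. -(a s * (E x s - e0)) + eta * exp (be * (s - sc))) has_derivative
      (\<lambda>v. ((2*al*a s*E y s) *\<^sub>R (y - z s)) \<bullet> v)) (at y) \<and>
     ((\<lambda>x. (2*al*a s*E x s) *\<^sub>R (x - z s)) has_derivative
      (\<lambda>v. ((2*al*a s*E y s) *\<^sub>R mat 1 - (4*al^2*a s*E y s) *\<^sub>R outer (y - z s)) *v v)) (at y) \<and>
     ((\<lambda>r. -(a r * (E y r - e0)) + eta * exp (be * (r - sc))) has_real_derivative
      (L*a s*(E y s - e0) - 2*al*a s*E y s*((y - z s) \<bullet> V) + eta*be*exp(be*(s-sc)))) (at s)"
    using d1 d2 d3 q by simp
next
  show "continuous_on UNIV (\<lambda>(y, s). -(a s * (E y s - e0)) + eta * exp (be * (s - sc)))"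
    unfolding E_def a_def z_def split_def by (intro continuous_intros)
  show "continuous_on UNIV (\<lambda>(y, s). (2*al*a s*E y s) *\<^sub>R (y - z s))"
    unfolding E_def a_def z_def split_def by (intro continuous_intros)
  show "continuous_on UNIV (\<lambda>(y, s). (2*al*a s*E y s) *\<^sub>R mat 1 - (4*al^2*a s*E y s) *\<^sub>R outer (y - z s))"
    unfolding E_def a_def z_def split_def outer_def by (intro continuous_intros)
  show "continuous_on UNIV (\<lambda>(y, s). L*a s*(E y s - e0) - 2*al*a s*E y s*((y - z s) \<bullet> V) + eta*be*exp(be*(s-sc)))"
    unfolding E_def a_def z_def split_def by (intro continuous_intros)
qed auto



lemma comparison:
  fixes F :: "real^'n \<Rightarrow> real \<Rightarrow> real^'n^'n \<Rightarrow> real"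
    and u :: "(real^'n) \<times> real \<Rightarrow> real"
  assumes vs: "visc_sub F Om u" and cu: "continuous_on Om u" and le: "\<forall>q\<in>Om. u q \<le> M"
    and K: "compact K" "K \<subseteq> Om"
    and tfa: "\<And>x t. test_fun \<phi> Dx Hx Dt (x,t)"
    and cphi: "continuous_on UNIV (\<lambda>q. \<phi> (fst q) (snd q))"
    and cond: "\<And>x t. (x,t) \<in> K \<Longrightarrow> \<phi> x t < 0 \<Longrightarrow> u (x,t) - \<phi> x t > M \<Longrightarrow>
        (\<exists>r>0. \<forall>y s. (y,s) \<in> Om \<longrightarrow> (y,s) \<in> ball (x,t) r \<longrightarrow> (y,s) \<in> K \<or> 0 \<le> \<phi> y s)
        \<and> F x t (Hx x t) - Dt x t < 0"
  shows "\<forall>x t. (x,t) \<in> K \<longrightarrow> u (x,t) - \<phi> x t \<le> M"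
proof (rule ccontr)
  assume "\<not> ?thesis"
  then obtain x0 t0 where x0: "(x0,t0) \<in> K" "u (x0,t0) - \<phi> x0 t0 > M" by force
  have "continuous_on K (\<lambda>q. u q - \<phi> (fst q) (snd q))"
    by (intro continuous_intros continuous_on_subset[OF cu K(2)] continuous_on_subset[OF cphi]) auto
  then obtain P where P: "P \<in> K" "\<forall>q\<in>K. u q - \<phi> (fst q) (snd q) \<le> u P - \<phi> (fst P) (snd P)"
    using continuous_attains_sup[OF K(1)] x0(1) by blast
  obtain x1 t1 where P1: "P = (x1,t1)" by fastforce
  have m: "u (x1,t1) - \<phi> x1 t1 > M" using P(2) x0 P1 by force
  have "u (x1,t1) \<le> M" using le K(2) P(1) P1 by auto
  then have neg: "\<phi> x1 t1 < 0" using m by linarith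
  obtain r where r: "r > 0" "\<forall>y s. (y,s) \<in> Om \<longrightarrow> (y,s) \<in> ball (x1,t1) r \<longrightarrow> (y,s) \<in> K \<or> 0 \<le> \<phi> y s"
    and Fc: "F x1 t1 (Hx x1 t1) - Dt x1 t1 < 0"
    using cond[OF P(1)[unfolded P1] neg m] by blast
  have touch: "\<exists>r>0. \<forall>(y,s)\<in>Om \<inter> ball (x1,t1) r. u (y,s) - \<phi> y s \<le> u (x1,t1) - \<phi> x1 t1"
  proof (intro exI[of _ r] conjI ballI)
    fix q assume q: "q \<in> Om \<inter> ball (x1,t1) r"
    obtain y s where qq: "q = (y,s)" by fastforce
    show "case q of (y,s) \<Rightarrow> u (y,s) - \<phi> y s \<le> u (x1,t1) - \<phi> x1 t1"
    proof (cases "(y,s) \<in> K")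
      case True then show ?thesis using P(2) P1 qq by force
    next
      case False
      then have "0 \<le> \<phi> y s" using r(2) q qq by auto
      moreover have "u (y,s) \<le> M" using le q qq by auto
      ultimately show ?thesis using m qq by auto
    qed
  qed (use r in auto)
  have "(x1,t1) \<in> Om" using K(2) P(1) P1 by auto
  then have "F x1 t1 (Hx x1 t1) - Dt x1 t1 \<ge> 0"
    using vs tfa[of x1 t1] touch unfolding visc_sub_def by blast
  then show False using Fc by linarith
qed



lemma key_ineq:
  fixes lam Lam n r Vb nw wv :: real
  assumes lam: "0 < lam" and Lam: "0 \<le> Lam" and n: "0 \<le> n" and r: "0 < r" and Vb: "0 \<le> Vb"
    and nw: "0 \<le> nw" "nw < r" and wv: "wv \<le> nw * Vb"
    and al: "al = (2*Lam*n + 2*r*Vb + 1)/(lam*r^2) + 2/r^2"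
    and L: "L = 4*al*(Lam*n + r*Vb) + 1"
  shows "exp (-al*nw^2) * (2*al*Lam*n - 4*al^2*lam*nw^2 + 2*al*wv) < L * (exp (-al*nw^2) - exp (-al*r^2))"
proof -
  have r2: "0 < r^2" using r by simp
  have alpos: "0 < al"
  proof -
    have "0 \<le> (2*Lam*n + 2*r*Vb + 1)/(lam*r^2)" using lam r2 Lam n Vb r by simp
    moreover have "0 < 2/r^2" using r2 by simp
    ultimately show ?thesis using al by linarith
  qed
  have alr: "al * r^2 = (2*Lam*n + 2*r*Vb + 1)/lam + 2"
    using al r2 lam by (simp add: field_simps)
  have alr2: "al * r^2 \<ge> 2" using alr lam Lam n r Vb by simp
  have al_lam: "al*lam*r^2 > 2*Lam*n + 2*r*Vb"
  proof -
    have "al*lam*r^2 = lam*(al*r^2)" by simp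
    also have "\<dots> = 2*Lam*n + 2*r*Vb + 1 + 2*lam" using alr lam by (simp add: field_simps)
    finally show ?thesis using lam by linarith
  qed
  define E where "E = exp (-al*nw^2)"
  have Epos: "0 < E" by (simp add: E_def)
  have q: "nw^2 < r^2" using nw by (simp add: power_strict_mono)
  have Ee0: "exp (-al*r^2) < E" unfolding E_def using q alpos by simp
  have Lpos: "0 < L"
  proof -
    have "0 \<le> 4*al*(Lam*n + r*Vb)" using alpos Lam n r Vb by simp
    then show ?thesis using L by linarith
  qed
  show ?thesis
  proof (cases "nw \<ge> r/2")
    case True
    have "(r/2)^2 \<le> nw^2" using True r by (intro power_mono) auto
    then have "r^2/4 \<le> nw^2" by (simp add: power_divide)
    then have "al^2*lam*r^2 \<le> 4*al^2*lam*nw^2" using alpos lam by (simp add: mult_left_mono)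
    moreover have "al*(al*lam*r^2) > al*(2*Lam*n + 2*r*Vb)" using al_lam alpos by simp
    moreover have "al*(2*r*Vb) \<ge> 2*al*wv"
    proof -
      have "nw*Vb \<le> r*Vb" using nw Vb by (intro mult_right_mono) auto
      then have "wv \<le> r*Vb" using wv by linarith
      then show ?thesis using alpos by simp
    qed
    ultimately have neg: "2*al*Lam*n - 4*al^2*lam*nw^2 + 2*al*wv < 0"
      by (simp add: power2_eq_square algebra_simps)
    have "E * (2*al*Lam*n - 4*al^2*lam*nw^2 + 2*al*wv) < 0" using neg Epos by (simp add: mult_pos_neg)
    also have "0 < L * (E - exp (-al*r^2))" using Lpos Ee0 by simp
    finally show ?thesis unfolding E_def .
  next
    case False
    then have "nw^2 \<le> (r/2)^2" using nw by (intro power_mono) auto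
    then have q4: "nw^2 \<le> r^2/4" by (simp add: power_divide)
    have "exp (-al*r^2) = E * exp (-(al*(r^2 - nw^2)))" unfolding E_def by (simp add: algebra_simps flip: exp_add)
    moreover have "al*(r^2 - nw^2) \<ge> 1"
    proof -
      have "al*(r^2 - nw^2) \<ge> al*(3*r^2/4)" using q4 alpos by (simp add: mult_left_mono)
      then show ?thesis using alr2 by simp
    qed
    moreover have "exp (-(1::real)) \<le> 1/2"
    proof -
      have "2 \<le> exp (1::real)" using exp_ge_add_one_self[of 1] by simp
      then show ?thesis by (simp add: exp_minus field_simps)
    qed
    ultimately have "exp (-al*r^2) \<le> E/2"
    proof -
      assume a1: "exp (-al*r^2) = E * exp (-(al*(r^2 - nw^2)))" and a2: "al*(r^2 - nw^2) \<ge> 1"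
        and a3: "exp (-(1::real)) \<le> 1/2"
      have "exp (-(al*(r^2 - nw^2))) \<le> exp (-1)" using a2 by simp
      then have "exp (-(al*(r^2 - nw^2))) \<le> 1/2" using a3 by linarith
      then have "E * exp (-(al*(r^2 - nw^2))) \<le> E * (1/2)" using Epos by (intro mult_left_mono) auto
      then show ?thesis using a1 by simp
    qed
    then have R: "L*E/2 \<le> L*(E - exp (-al*r^2))" using Lpos by (simp add: field_simps)
    have "nw*Vb \<le> r*Vb" using nw Vb by (intro mult_right_mono) auto
    then have "wv \<le> r*Vb" using wv by linarith
    then have "2*al*wv \<le> 2*al*(r*Vb)" using alpos by simp
    moreover have "0 \<le> 4*al^2*lam*nw^2" using lam by simp
    ultimately have "2*al*Lam*n - 4*al^2*lam*nw^2 + 2*al*wv \<le> 2*al*(Lam*n + r*Vb)"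
      by (simp add: algebra_simps)
    also have "\<dots> < L/2" using L by simp
    finally have "E*(2*al*Lam*n - 4*al^2*lam*nw^2 + 2*al*wv) < E*(L/2)" using Epos by simp
    then have "E*(2*al*Lam*n - 4*al^2*lam*nw^2 + 2*al*wv) < L*E/2" by (simp add: mult.commute)
    then show ?thesis using R unfolding E_def by linarith
  qed
qed




lemma dist_pair_le: "dist (a,b) (c,d) \<le> dist a c + dist b (d::real)"
proof -
  have "dist (a,b) (c,d) = sqrt ((dist a c)^2 + (dist b d)^2)" by (simp add: dist_Pair_Pair)
  also have "\<dots> \<le> \<bar>dist a c\<bar> + \<bar>dist b d\<bar>" by (rule sqrt_sum_squares_le_sum_abs)
  finally show ?thesis by simp
qed

lemma K_mem:
  fixes z :: "real \<Rightarrow> real^'n"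
  shows "(y,s) \<in> (\<lambda>(w,s). (z s + w, s)) ` (cball 0 r \<times> {a..b}) \<longleftrightarrow> a \<le> s \<and> s \<le> b \<and> norm (y - z s) \<le> r"
proof
  assume "(y,s) \<in> (\<lambda>(w,s). (z s + w, s)) ` (cball 0 r \<times> {a..b})"
  then show "a \<le> s \<and> s \<le> b \<and> norm (y - z s) \<le> r" by (auto simp: dist_norm)
next
  assume "a \<le> s \<and> s \<le> b \<and> norm (y - z s) \<le> r"
  then show "(y,s) \<in> (\<lambda>(w,s). (z s + w, s)) ` (cball 0 r \<times> {a..b})"
    by (intro image_eqI[of _ _ "(y - z s, s)"]) (auto simp: dist_norm norm_minus_commute)
qed

lemma K_compact:
  fixes z :: "real \<Rightarrow> real^'n"
  assumes "continuous_on UNIV z"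
  shows "compact ((\<lambda>(w,s). (z s + w, s)) ` (cball 0 r \<times> {a..b}))"
proof (rule compact_continuous_image)
  show "compact (cball (0::real^'n) r \<times> {a..b})" by (intro compact_Times) auto
  show "continuous_on (cball 0 r \<times> {a..b}) (\<lambda>(w,s). (z s + w, s))"
    unfolding split_def
    by (intro continuous_intros continuous_on_compose2[OF assms]) auto
qed



lemma step:
  fixes F :: "real^'n \<Rightarrow> real \<Rightarrow> real^'n^'n \<Rightarrow> real"
    and u :: "(real^'n) \<times> real \<Rightarrow> real"
    and x1 ys :: "real^'n"
  assumes vs: "visc_sub F Om u" and cu: "continuous_on Om u" and le: "\<forall>q\<in>Om. u q \<le> M"
    and DOm: "D \<subseteq> Om"
    and S: "\<forall>(x,t)\<in>D. \<forall>X N. symmetric_mat X \<longrightarrow> symmetric_mat N \<longrightarrow> psd N \<longrightarrow>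
            lam * trace N \<le> F x t (X + N) - F x t X \<and> F x t (X + N) - F x t X \<le> Lam * trace N"
    and F0: "\<forall>(x,t)\<in>D. F x t 0 = 0"
    and lam: "0 < lam" "lam \<le> Lam"
    and cylD: "cyl (t1-h) t1 x1 h \<subseteq> D"
    and dh: "norm (ys - x1) < h" and ss: "t1 - h < ss" "ss < t1"
    and del: "0 < del" and rho: "0 < rho" and bad: "\<forall>q\<in>ball (ys,ss) rho. u q < M - del"
    and r_def: "r = min (rho/3) ((h - norm (ys - x1))/2)"
    and Vb_def: "Vb = 2 * norm (ys - x1) / (t1 - ss)"
    and al_def: "al = (2*Lam*real CARD('n) + 2*r*Vb + 1)/(lam*r^2) + 2/r^2"
    and L_def: "L = 4*al*(Lam*real CARD('n) + r*Vb) + 1"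
    and e0_def: "e0 = exp (-al*r^2)"
    and c0_def: "c0 = del * exp (-L*(t1 - ss)) * (1 - e0)"
    and sc: "(ss + t1)/2 \<le> sc" "sc < t1"
  shows "0 < c0 \<and> u (x1,sc) \<le> M - c0/2"
proof -
  define d where "d = norm (ys - x1)"
  define n where "n = real CARD('n)"
  have r: "0 < r" using r_def rho dh by simp
  have Vb: "0 \<le> Vb" using Vb_def ss by simp
  have Lam0: "0 \<le> Lam" using lam by simp
  have n0: "0 \<le> n" by (simp add: n_def)
  have alpos: "0 < al"
  proof -
    have "0 \<le> (2*Lam*n + 2*r*Vb + 1)/(lam*r^2)" using lam r Lam0 n0 Vb by simp
    moreover have "0 < 2/r^2" using r by simp
    ultimately show ?thesis using al_def[folded n_def] by linarith
  qed
  have Lpos: "0 < L"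
  proof -
    have "0 \<le> 4*al*(Lam*n + r*Vb)" using alpos Lam0 n0 r Vb by simp
    then show ?thesis using L_def[folded n_def] by linarith
  qed
  have e0: "0 < e0" "e0 < 1" using e0_def alpos r by auto
  have c0: "0 < c0" using c0_def del e0 by simp
  define V where "V = (1/(sc - ss)) *\<^sub>R (x1 - ys)"
  define th where "th = (t1 - sc)/2"
  define sb where "sb = sc + th"
  define eta where "eta = c0/2"
  define be where "be = 2*del/(eta*th)"
  define tau where "tau = rho/(3*(Vb+1))"
  define z where "z = (\<lambda>s. ys + (s - ss) *\<^sub>R V)"
  define E where "E = (\<lambda>y s. exp (-al * ((y - z s) \<bullet> (y - z s))))"
  define a where "a = (\<lambda>s. del * exp (-L * (s - ss)))"
  define phi where "phi = (\<lambda>y s. -(a s * (E y s - e0)) + eta * exp (be * (s - sc)))"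
  define Dx where "Dx = (\<lambda>y s. (2*al*a s*E y s) *\<^sub>R (y - z s))"
  define Hx where "Hx = (\<lambda>y s. (2*al*a s*E y s) *\<^sub>R mat 1 - (4*al^2*a s*E y s) *\<^sub>R outer (y - z s))"
  define Dt where "Dt = (\<lambda>y s. L*a s*(E y s - e0) - 2*al*a s*E y s*((y - z s) \<bullet> V) + eta*be*exp(be*(s-sc)))"
  define K where "K = (\<lambda>(w,s). (z s + w, s)) ` (cball 0 r \<times> {ss..sb})"
  have scss: "0 < sc - ss" using sc ss by simp
  have th: "0 < th" "th \<le> sc - ss" using sc ss by (auto simp: th_def)
  have sbt: "sb < t1" using sc by (simp add: sb_def th_def field_simps)
  have eta: "0 < eta" using c0 by (simp add: eta_def)
  have be: "0 < be" using del eta th by (simp add: be_def)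
  have etabe: "eta * be * th / 2 = del" using eta th by (simp add: be_def field_simps)
  have tau: "0 < tau" using rho Vb by (simp add: tau_def)
  have normV: "norm V \<le> Vb"
  proof -
    have "norm V = d / (sc - ss)" using scss by (simp add: V_def d_def norm_minus_commute)
    also have "\<dots> \<le> d / ((t1 - ss)/2)" using scss sc ss by (intro divide_left_mono) (auto simp: d_def)
    also have "\<dots> = Vb" by (simp add: Vb_def d_def)
    finally show ?thesis .
  qed
  have zsc: "z sc = x1" using scss by (simp add: z_def V_def)
  have Kmem: "\<And>y s. (y,s) \<in> K \<longleftrightarrow> ss \<le> s \<and> s \<le> sb \<and> norm (y - z s) \<le> r"
    unfolding K_def by (rule K_mem)
  have Ewn: "\<And>y s. E y s = exp (-al * (norm (y - z s))^2)" by (simp add: E_def power2_norm_eq_inner)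
  have aD: "\<And>s. ss \<le> s \<Longrightarrow> 0 < a s \<and> a s \<le> del"
    using del Lpos by (auto simp: a_def mult_le_cancel_left1)
  have tfa: "\<And>x t. test_fun phi Dx Hx Dt (x,t)"
    unfolding phi_def Dx_def Hx_def Dt_def E_def a_def z_def by (rule tf)
  have cphi: "continuous_on UNIV (\<lambda>q. phi (fst q) (snd q))"
    unfolding phi_def E_def a_def z_def by (intro continuous_intros)
  have Kc: "compact K" unfolding K_def z_def by (rule K_compact) (intro continuous_intros)
  have KD: "K \<subseteq> D"
  proof
    fix q assume "q \<in> K"
    then obtain y s where q: "q = (y,s)" "ss \<le> s" "s \<le> sb" "norm (y - z s) \<le> r"
      using Kmem by (metis surj_pair)
    have zx: "z s - x1 = (1 - (s - ss)/(sc - ss)) *\<^sub>R (ys - x1)"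
    proof -
      have "(s - ss) *\<^sub>R V = ((s - ss)/(sc - ss)) *\<^sub>R (x1 - ys)" by (simp add: V_def)
      then show ?thesis by (simp add: z_def scaleR_diff_left scaleR_diff_right algebra_simps)
    qed
    have mu: "\<bar>1 - (s - ss)/(sc - ss)\<bar> \<le> 1"
    proof -
      have "0 \<le> (s - ss)/(sc - ss)" using q scss by simp
      moreover have "(s - ss)/(sc - ss) \<le> 2" using q scss th by (simp add: sb_def divide_simps)
      ultimately show ?thesis by (simp add: field_simps)
    qed
    have "norm (z s - x1) \<le> d" unfolding zx d_def using mu
      using mult_right_mono[OF mu norm_ge_zero[of "ys - x1"]] by simp
    then have "norm (y - x1) \<le> r + d" using q norm_triangle_ineq[of "y - z s" "z s - x1"] by simp
    also have "\<dots> < h"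
    proof -
      have "r \<le> (h - d)/2" unfolding r_def d_def by (rule min.cobounded2)
      moreover have "d < h" using dh d_def by simp
      ultimately show ?thesis by (simp add: field_simps)
    qed
    finally have "dist y x1 < h" by (simp add: dist_norm)
    moreover have "t1 - h < s" "s < t1" using q ss sbt by auto
    ultimately show "q \<in> D" using cylD q by (auto simp: cyl_def)
  qed
  have res: "\<forall>x t. (x,t) \<in> K \<longrightarrow> u (x,t) - phi x t \<le> M"
  proof (rule comparison[OF vs cu le Kc _ tfa cphi])
    show "K \<subseteq> Om" using KD DOm by simp
  next
    fix x t assume xK: "(x,t) \<in> K" and neg: "phi x t < 0" and big: "u (x,t) - phi x t > M"
    have xt: "ss \<le> t" "t \<le> sb" "norm (x - z t) \<le> r" using xK Kmem by auto
    have a_t: "0 < a t" "a t \<le> del" using aD xt by auto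
    have Ele: "E x t \<le> 1" "0 < E x t" using alpos by (auto simp: Ewn)
    have aE: "a t * (E x t - e0) \<le> del"
    proof -
      have "a t * (E x t - e0) \<le> a t * 1" using a_t Ele e0 by (intro mult_left_mono) auto
      then show ?thesis using a_t by linarith
    qed
    have psi_le: "-phi x t \<le> del"
    proof -
      have m: "a t * (E x t - e0) \<le> a t * 1" using a_t Ele e0 by (intro mult_left_mono) auto
      have m2: "0 \<le> eta * exp (be * (t - sc))" using eta by simp
      have "-phi x t = a t * (E x t - e0) - eta * exp (be * (t - sc))" by (simp add: phi_def)
      then show ?thesis using m m2 a_t by linarith
    qed
    have t_low: "ss + tau < t"
    proof (rule ccontr)
      assume "\<not> ss + tau < t"
      then have tt: "t - ss \<le> tau" by simp
      have "norm (x - ys) \<le> norm (x - z t) + norm ((t - ss) *\<^sub>R V)"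
        using norm_triangle_ineq[of "x - z t" "(t - ss) *\<^sub>R V"] by (simp add: z_def algebra_simps)
      also have "\<dots> \<le> r + tau * Vb"
      proof -
        have "norm ((t - ss) *\<^sub>R V) = (t - ss) * norm V" using xt by simp
        also have "\<dots> \<le> tau * Vb" using tt xt normV by (intro mult_mono) auto
        finally show ?thesis using xt by simp
      qed
      finally have "dist (x,t) (ys,ss) \<le> r + tau * Vb + tau"
        using dist_pair_le[of x t ys ss] tt xt by (simp add: dist_norm)
      also have "\<dots> = r + rho/3"
      proof -
        have "3*(Vb + 1) \<noteq> 0" using Vb by simp
        then have "tau * (Vb + 1) = rho/3" unfolding tau_def by (simp add: field_simps)
        then show ?thesis by (simp add: algebra_simps)
      qed
      also have "\<dots> < rho"
      proof -
        have "r \<le> rho/3" unfolding r_def by (rule min.cobounded1)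
        then show ?thesis using rho by linarith
      qed
      finally have "u (x,t) < M - del" using bad by (simp add: dist_commute)
      then show False using big psi_le by simp
    qed
    have t_up: "t < sc + th/2"
    proof (rule ccontr)
      assume "\<not> t < sc + th/2"
      then have tt: "th/2 \<le> t - sc" by simp
      have "1 + be*(t - sc) \<le> exp (be*(t - sc))" by (rule exp_ge_add_one_self)
      moreover have "be * (th/2) \<le> be*(t - sc)" using be tt by simp
      ultimately have "1 + be*(th/2) \<le> exp (be*(t - sc))" by linarith
      then have "eta * (1 + be*(th/2)) \<le> eta * exp (be*(t - sc))" using eta by (intro mult_left_mono) auto
      then have "eta + del \<le> eta * exp (be*(t - sc))" using etabe by (simp add: algebra_simps)
      then show False using aE neg eta by (simp add: phi_def)
    qed
    have Epos: "E x t > e0"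
    proof -
      have "0 < eta * exp (be * (t - sc))" using eta by simp
      then have "0 < a t * (E x t - e0)" using neg by (simp add: phi_def)
      then show ?thesis using a_t by (simp add: zero_less_mult_iff)
    qed
    have nw: "norm (x - z t) < r"
    proof -
      have "-al * (norm (x - z t))^2 > -al*r^2" using Epos by (simp add: Ewn e0_def)
      then have "(norm (x - z t))^2 < r^2" using alpos by simp
      then show ?thesis using r by (simp add: power_less_imp_less_base)
    qed
    show "(\<exists>r0>0. \<forall>y s. (y,s) \<in> Om \<longrightarrow> (y,s) \<in> ball (x,t) r0 \<longrightarrow> (y,s) \<in> K \<or> 0 \<le> phi y s)
        \<and> F x t (Hx x t) - Dt x t < 0"
    proof
      show "\<exists>r0>0. \<forall>y s. (y,s) \<in> Om \<longrightarrow> (y,s) \<in> ball (x,t) r0 \<longrightarrow> (y,s) \<in> K \<or> 0 \<le> phi y s"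
      proof (intro exI[of _ "min (t - ss) (sb - t)"] conjI allI impI)
        show "0 < min (t - ss) (sb - t)" using t_low t_up tau th by (simp add: sb_def)
      next
        fix y s assume "(y,s) \<in> ball (x,t) (min (t - ss) (sb - t))"
        then have "dist (t) s < min (t - ss) (sb - t)"
          using dist_snd_le[of "(x,t)" "(y,s)"] by (simp add: dist_commute)
        then have ss': "ss < s" "s < sb" by (auto simp: dist_real_def)
        show "(y,s) \<in> K \<or> 0 \<le> phi y s"
        proof (cases "norm (y - z s) \<le> r")
          case True then show ?thesis using ss' Kmem by auto
        next
          case False
          then have "r^2 < (norm (y - z s))^2" using r by (simp add: power_strict_mono)
          then have "E y s < e0" using alpos by (simp add: Ewn e0_def)
          moreover have "0 < a s" using aD ss' by auto
          ultimately have "a s * (E y s - e0) \<le> 0" by (simp add: mult_le_0_iff)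
          moreover have "0 \<le> eta * exp (be * (s - sc))" using eta by simp
          ultimately show ?thesis by (simp add: phi_def)
        qed
      qed
    next
      have xD: "(x,t) \<in> D" using KD xK by auto
      define w where "w = x - z t"
      have c1: "0 \<le> 2*al*a t*E x t" using alpos a_t Ele by simp
      have k1: "0 \<le> 4*al^2*a t*E x t" using a_t Ele by simp
      have FS: "\<forall>X N. symmetric_mat X \<longrightarrow> symmetric_mat N \<longrightarrow> psd N \<longrightarrow>
            lam * trace N \<le> F x t (X + N) - F x t X \<and> F x t (X + N) - F x t X \<le> Lam * trace N"
        using S xD by blast
      have F0x: "F x t 0 = 0" using F0 xD by blast
      have A1: "F x t (Hx x t) \<le> Lam * (2*al*a t*E x t) * n - lam * (4*al^2*a t*E x t) * (w \<bullet> w)"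
        unfolding Hx_def w_def n_def by (rule pucci[where F=F and x=x and t=t, OF FS F0x c1 k1])
      have ww: "w \<bullet> w = (norm w)^2" by (simp add: power2_norm_eq_inner)
      have wv: "w \<bullet> V \<le> norm w * Vb"
      proof -
        have "w \<bullet> V \<le> norm w * norm V" by (rule norm_cauchy_schwarz)
        also have "\<dots> \<le> norm w * Vb" using normV by (simp add: mult_left_mono)
        finally show ?thesis .
      qed
      have KI: "exp (-al*(norm w)^2) * (2*al*Lam*n - 4*al^2*lam*(norm w)^2 + 2*al*(w \<bullet> V))
           < L * (exp (-al*(norm w)^2) - exp (-al*r^2))"
        by (rule key_ineq[OF lam(1) Lam0 n0 r Vb _ _ wv al_def[folded n_def] L_def[folded n_def]])
           (use nw w_def in auto)
      have EE: "E x t = exp (-al*(norm w)^2)" by (simp add: Ewn w_def)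
      have A2: "a t * (E x t * (2*al*Lam*n - 4*al^2*lam*(norm w)^2 + 2*al*(w \<bullet> V)))
           < a t * (L * (E x t - e0))"
        using KI a_t by (simp add: EE e0_def)
      have A3: "a t * (E x t * (2*al*Lam*n - 4*al^2*lam*(norm w)^2 + 2*al*(w \<bullet> V)))
          = Lam * (2*al*a t*E x t) * n - lam * (4*al^2*a t*E x t) * (w \<bullet> w) + 2*al*a t*E x t*(w \<bullet> V)"
        by (simp add: ww algebra_simps)
      have A4: "a t * (L * (E x t - e0)) = L*a t*(E x t - e0)" by simp
      have A5: "Dt x t = L*a t*(E x t - e0) - 2*al*a t*E x t*(w \<bullet> V) + eta*be*exp(be*(t-sc))"
        by (simp add: Dt_def w_def)
      have "0 \<le> eta*be*exp(be*(t-sc))" using eta be by simp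
      then show "F x t (Hx x t) - Dt x t < 0" using A1 A2 A3 A4 A5 by linarith
    qed
  qed
  have "(x1,sc) \<in> K" using Kmem zsc scss th by (auto simp: sb_def r less_imp_le)
  then have "u (x1,sc) - phi x1 sc \<le> M" using res by blast
  moreover have "phi x1 sc = -(a sc * (1 - e0)) + eta"
    by (simp add: phi_def E_def zsc)
  moreover have "c0 \<le> a sc * (1 - e0)"
  proof -
    have "exp (-L*(t1 - ss)) \<le> exp (-L*(sc - ss))" using Lpos sc by simp
    then have "del * exp (-L*(t1 - ss)) \<le> a sc" using del by (simp add: a_def)
    then show ?thesis using e0 by (simp add: c0_def mult_right_mono)
  qed
  ultimately show ?thesis using c0 by (simp add: eta_def)
qed



lemma local_max:
  fixes F :: "real^'n \<Rightarrow> real \<Rightarrow> real^'n^'n \<Rightarrow> real"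
    and u :: "(real^'n) \<times> real \<Rightarrow> real"
    and x1 :: "real^'n"
  assumes vs: "visc_sub F Om u" and cu: "continuous_on Om u" and le: "\<forall>q\<in>Om. u q \<le> M"
    and DOm: "D \<subseteq> Om" and oD: "open D"
    and S: "\<forall>(x,t)\<in>D. \<forall>X N. symmetric_mat X \<longrightarrow> symmetric_mat N \<longrightarrow> psd N \<longrightarrow>
            lam * trace N \<le> F x t (X + N) - F x t X \<and> F x t (X + N) - F x t X \<le> Lam * trace N"
    and F0: "\<forall>(x,t)\<in>D. F x t 0 = 0"
    and lam: "0 < lam" "lam \<le> Lam"
    and h: "0 < h" and cylD: "cyl (t1-h) t1 x1 h \<subseteq> D"
    and p: "(x1,t1) \<in> Om" and up: "u (x1,t1) = M"
  shows "\<forall>y s. (y,s) \<in> cyl (t1-h) t1 x1 h \<longrightarrow> u (y,s) = M"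
proof (intro allI impI, rule ccontr)
  fix ys ss assume yc: "(ys,ss) \<in> cyl (t1-h) t1 x1 h" and ne: "u (ys,ss) \<noteq> M"
  have yD: "(ys,ss) \<in> D" using yc cylD by auto
  have ylt: "u (ys,ss) < M" using le DOm yD ne by force
  define del where "del = (M - u (ys,ss))/2"
  have del: "0 < del" using ylt by (simp add: del_def)
  obtain rho1 where rho1: "0 < rho1" "ball (ys,ss) rho1 \<subseteq> D"
    using oD yD open_contains_ball by blast
  have cD: "continuous_on D u" using continuous_on_subset[OF cu DOm] .
  obtain rho2 where rho2: "0 < rho2" "\<forall>q\<in>D. dist q (ys,ss) < rho2 \<longrightarrow> dist (u q) (u (ys,ss)) < del"
    using cD[unfolded continuous_on_iff] yD del by blast
  define rho where "rho = min rho1 rho2"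
  have rho: "0 < rho" using rho1 rho2 by (simp add: rho_def)
  have bad: "\<forall>q\<in>ball (ys,ss) rho. u q < M - del"
  proof
    fix q assume q: "q \<in> ball (ys,ss) rho"
    then have "q \<in> D" using rho1 by (auto simp: rho_def)
    moreover have "dist q (ys,ss) < rho2" using q by (auto simp: rho_def dist_commute)
    ultimately have "dist (u q) (u (ys,ss)) < del" using rho2 by blast
    then have "u q - u (ys,ss) < del" by (simp add: dist_real_def abs_less_iff)
    moreover have "M - del = u (ys,ss) + del" by (simp add: del_def field_simps)
    ultimately show "u q < M - del" by linarith
  qed
  have ycy: "dist ys x1 < h" "t1 - h < ss" "ss < t1" using yc by (auto simp: cyl_def)
  define r where "r = min (rho/3) ((h - norm (ys - x1))/2)"
  define Vb where "Vb = 2 * norm (ys - x1) / (t1 - ss)"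
  define al where "al = (2*Lam*real CARD('n) + 2*r*Vb + 1)/(lam*r^2) + 2/r^2"
  define L where "L = 4*al*(Lam*real CARD('n) + r*Vb) + 1"
  define e0 where "e0 = exp (-al*r^2)"
  define c0 where "c0 = del * exp (-L*(t1 - ss)) * (1 - e0)"
  have ST: "\<And>sc. (ss + t1)/2 \<le> sc \<Longrightarrow> sc < t1 \<Longrightarrow> 0 < c0 \<and> u (x1,sc) \<le> M - c0/2"
    by (rule step[OF vs cu le DOm S F0 lam cylD _ ycy(2,3) del rho bad r_def Vb_def al_def L_def e0_def c0_def])
       (use ycy in \<open>auto simp: dist_norm\<close>)
  have c0: "0 < c0" using ST[of "(ss+t1)/2"] ycy by simp
  obtain d where d: "0 < d" "\<forall>q\<in>Om. dist q (x1,t1) < d \<longrightarrow> dist (u q) (u (x1,t1)) < c0/4"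
    using cu[unfolded continuous_on_iff] p c0 by (metis zero_less_divide_iff zero_less_numeral)
  define sc where "sc = max ((ss+t1)/2) (t1 - d/2)"
  have sc: "(ss + t1)/2 \<le> sc" "sc < t1" using ycy d by (auto simp: sc_def)
  have "(x1,sc) \<in> D" using cylD sc ycy h by (auto simp: cyl_def)
  then have "(x1,sc) \<in> Om" using DOm by auto
  moreover have "dist (x1,sc) (x1,t1) < d" using sc d by (auto simp: dist_Pair_Pair dist_real_def sc_def)
  ultimately have "dist (u (x1,sc)) M < c0/4" using d up by auto
  moreover have "u (x1,sc) \<le> M - c0/2" using ST sc by blast
  ultimately show False using c0 by (simp add: dist_real_def abs_less_iff)
qed



lemma prop_curve:
  fixes u :: "(real^'n) \<times> real \<Rightarrow> real" and c :: "real \<Rightarrow> (real^'n) \<times> real"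
  assumes loc: "\<And>x t. (x,t) \<in> Om \<Longrightarrow> u (x,t) = M \<Longrightarrow> \<exists>h>0. \<forall>y s. (y,s) \<in> cyl (t-h) t x h \<longrightarrow> u (y,s) = M"
    and cc: "continuous_on {a..b} c" and cO: "c ` {a..b} \<subseteq> Om" and cs: "\<forall>t\<in>{a..b}. snd (c t) = t"
    and ab: "a \<le> b" and ub: "u (c b) = M" and cu: "continuous_on Om u"
  shows "u (c a) = M"
proof -
  define A where "A = {t\<in>{a..b}. \<forall>\<sigma>\<in>{t..b}. u (c \<sigma>) = M}"
  define th where "th = Inf A"
  have bA: "b \<in> A" using ub ab by (auto simp: A_def)
  have Ane: "A \<noteq> {}" using bA by auto
  have Abd: "bdd_below A" by (auto simp: A_def bdd_below_def)
  have th_le: "th \<le> b" using bA Abd by (simp add: th_def cInf_lower)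
  have a_le: "a \<le> th" using Ane by (auto simp: th_def A_def intro!: cInf_greatest)
  have above: "\<forall>\<sigma>\<in>{th<..b}. u (c \<sigma>) = M"
  proof
    fix \<sigma> assume s: "\<sigma> \<in> {th<..b}"
    then obtain t where "t \<in> A" "t < \<sigma>" using cInf_less_iff[OF Ane Abd] by (auto simp: th_def)
    then show "u (c \<sigma>) = M" using s by (auto simp: A_def)
  qed
  have f: "continuous_on {a..b} (u \<circ> c)" by (rule continuous_on_compose[OF cc continuous_on_subset[OF cu cO]])
  have uth: "u (c th) = M"
  proof (cases "th = b")
    case True then show ?thesis using ub by simp
  next
    case False
    then have thb: "th < b" using th_le by simp
    show ?thesis
    proof (rule ccontr)
      assume ne: "u (c th) \<noteq> M"
      define e where "e = \<bar>u (c th) - M\<bar>"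
      have e: "0 < e" using ne by (simp add: e_def)
      obtain d where d: "0 < d" "\<forall>x'\<in>{a..b}. dist x' th < d \<longrightarrow> dist ((u \<circ> c) x') ((u \<circ> c) th) < e"
        using f[unfolded continuous_on_iff] a_le th_le e by fastforce
      define \<sigma> where "\<sigma> = min b (th + d/2)"
      have sg: "\<sigma> \<in> {th<..b}" "\<sigma> \<in> {a..b}" "dist \<sigma> th < d" using thb d a_le by (auto simp: \<sigma>_def dist_real_def)
      then have "dist (u (c \<sigma>)) (u (c th)) < e" using d by auto
      moreover have "u (c \<sigma>) = M" using above sg by auto
      ultimately show False by (simp add: e_def dist_real_def abs_minus_commute)
    qed
  qed
  have "th = a"
  proof (rule ccontr)
    assume "th \<noteq> a"
    then have ath: "a < th" using a_le by simp
    obtain x where cth: "c th = (x, th)" using cs a_le th_le by (metis prod.collapse atLeastAtMost_iff)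
    have "(x,th) \<in> Om" using cO a_le th_le cth by (metis atLeastAtMost_iff image_subset_iff)
    then obtain h where h: "0 < h" "\<forall>y s. (y,s) \<in> cyl (th-h) th x h \<longrightarrow> u (y,s) = M"
      using loc uth cth by metis
    obtain ep where ep: "0 < ep" "\<forall>x'\<in>{a..b}. dist x' th < ep \<longrightarrow> dist (c x') (c th) < h"
      using cc[unfolded continuous_on_iff] a_le th_le h by fastforce
    define t' where "t' = max a (th - min ep h / 2)"
    have t': "t' < th" "a \<le> t'" using ath ep h by (auto simp: t'_def)
    have "t' \<in> A"
    proof -
      have "\<forall>\<sigma>\<in>{t'..b}. u (c \<sigma>) = M"
      proof
        fix \<sigma> assume s: "\<sigma> \<in> {t'..b}"
        consider "\<sigma> > th" | "\<sigma> = th" | "\<sigma> < th" by linarith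
        then show "u (c \<sigma>) = M"
        proof cases
          case 1 then show ?thesis using above s by auto
        next
          case 2 then show ?thesis using uth by simp
        next
          case 3
          have sab: "\<sigma> \<in> {a..b}" using s t' by auto
          have ds: "dist \<sigma> th < ep" using 3 s ep h by (auto simp: t'_def dist_real_def)
          obtain y where cy: "c \<sigma> = (y, \<sigma>)" using cs sab by (metis prod.collapse)
          have "dist (c \<sigma>) (c th) < h" using ep sab ds by auto
          then have "dist y x < h" using dist_fst_le[of "c \<sigma>" "c th"] cy cth by simp
          moreover have "th - h < \<sigma>" using s h ep by (auto simp: t'_def)
          ultimately show ?thesis using h 3 cy by (auto simp: cyl_def)
        qed
      qed
      then show ?thesis using t' th_le by (auto simp: A_def)
    qed
    then have "th \<le> t'" using Abd by (simp add: th_def cInf_lower)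
    then show False using t' by simp
  qed
  then show ?thesis using uth by simp
qed



lemma bl_single: "broken_line [a] = {a}"
  by (simp add: broken_line_def)

lemma bl_cons2: "broken_line (a # b # rest) = closed_segment a b \<union> broken_line (b # rest)"
proof -
  have U: "(\<Union>i<length (a#b#rest) - 1. closed_segment ((a#b#rest) ! i) ((a#b#rest) ! Suc i))
      = closed_segment a b \<union> (\<Union>i<length (b#rest) - 1. closed_segment ((b#rest) ! i) ((b#rest) ! Suc i))"
    by (simp add: lessThan_Suc_eq_insert_0 UN_insert image_Suc_lessThan[symmetric] del: image_Suc_lessThan)
  show ?thesis unfolding broken_line_def U by auto
qed

lemma bl_connected: "ps \<noteq> [] \<Longrightarrow> connected (broken_line (ps :: ('a::euclidean_space) list))"
proof (induction ps rule: induct_list012)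
  case 1 then show ?case by simp
next
  case (2 x) then show ?case by (simp add: bl_single)
next
  case (3 a b rest)
  have "b \<in> closed_segment a b" by simp
  moreover have "b \<in> broken_line (b # rest)" by (simp add: broken_line_def)
  ultimately show ?case unfolding bl_cons2 using 3
    by (intro connected_Un) (auto simp: connected_segment intro!: exI[of _ b])
qed

lemma bl_compact: "compact (broken_line (ps :: ('a::euclidean_space) list))"
  unfolding broken_line_def
  by (intro compact_Un finite_imp_compact compact_UN compact_segment finite_lessThan finite_set)

lemma bl_hd_last: "ps \<noteq> [] \<Longrightarrow> hd ps \<in> broken_line ps \<and> last ps \<in> broken_line ps"
  by (simp add: broken_line_def hd_in_set last_in_set)



lemma cyl_below:
  fixes D :: "((real^'n) \<times> real) set"
  assumes oD: "open D" and p: "(x,t) \<in> D \<union> upper_base D"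
  shows "\<exists>h>0. cyl (t-h) t x h \<subseteq> D"
proof (cases "(x,t) \<in> D")
  case True
  then obtain e where e: "0 < e" "ball (x,t) e \<subseteq> D" using oD open_contains_ball by blast
  show ?thesis
  proof (intro exI[of _ "e/2"] conjI subsetI)
    fix q assume q: "q \<in> cyl (t - e/2) t x (e/2)"
    obtain y s where qq: "q = (y,s)" by fastforce
    have "dist (x,t) (y,s) \<le> dist x y + dist t s" by (rule dist_pair_le)
    also have "\<dots> < e/2 + e/2" using q qq by (auto simp: cyl_def dist_commute dist_real_def intro!: add_strict_mono)
    finally show "q \<in> D" using e qq by auto
  qed (use e in auto)
next
  case False
  then have "(x,t) \<in> upper_base D" using p by auto
  then show ?thesis unfolding upper_base_def by auto
qed

lemma sub_case:
  fixes D :: "((real^'n) \<times> real) set"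
    and F :: "real^'n \<Rightarrow> real \<Rightarrow> real^'n^'n \<Rightarrow> real"
    and u :: "(real^'n) \<times> real \<Rightarrow> real"
  assumes oD: "open D"
    and lam: "0 < lam" "lam \<le> Lam"
    and S: "\<forall>(x,t)\<in>D. \<forall>X N. symmetric_mat X \<longrightarrow> symmetric_mat N \<longrightarrow> psd N \<longrightarrow>
            lam * trace N \<le> F x t (X + N) - F x t X \<and> F x t (X + N) - F x t X \<le> Lam * trace N"
    and F0: "\<forall>(x,t)\<in>D. F x t 0 = 0"
    and cu: "continuous_on (D \<union> upper_base D) u"
    and p0: "p0 \<in> D \<union> upper_base D" and up: "u p0 = M"
    and vs: "visc_sub F (D \<union> upper_base D) u" and le: "\<forall>q\<in>D \<union> upper_base D. u q \<le> M"
  shows "\<forall>q\<in>subordinate D p0. u q = M"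
proof
  define Om where "Om = D \<union> upper_base D"
  have DOm: "D \<subseteq> Om" by (simp add: Om_def)
  have loc: "\<And>x t. (x,t) \<in> Om \<Longrightarrow> u (x,t) = M \<Longrightarrow> \<exists>h>0. \<forall>y s. (y,s) \<in> cyl (t-h) t x h \<longrightarrow> u (y,s) = M"
  proof -
    fix x t assume xt: "(x,t) \<in> Om" and ux: "u (x,t) = M"
    obtain h where h: "0 < h" "cyl (t-h) t x h \<subseteq> D" using cyl_below[OF oD, of x t] xt unfolding Om_def by blast
    show "\<exists>h>0. \<forall>y s. (y,s) \<in> cyl (t-h) t x h \<longrightarrow> u (y,s) = M"
      using local_max[OF vs[folded Om_def] cu[folded Om_def] le[folded Om_def] DOm oD S F0 lam h xt ux] h
      by blast
  qed
  fix q assume "q \<in> subordinate D p0"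
  then obtain ps where q: "q \<in> D" "ps \<noteq> []" "hd ps = q" "last ps = p0"
      "broken_line ps \<subseteq> Om" "inj_on snd (broken_line ps)" "snd q \<le> snd p0"
    unfolding subordinate_def Om_def by blast
  define Ls where "Ls = broken_line ps"
  have qL: "q \<in> Ls" and pL: "p0 \<in> Ls" using bl_hd_last[OF q(2)] q by (auto simp: Ls_def)
  obtain g where g: "homeomorphism Ls (snd ` Ls) snd g"
    using homeomorphism_compact[OF bl_compact continuous_on_snd refl q(6)] by (auto simp: Ls_def)
  have gc: "continuous_on (snd ` Ls) g" and gs: "\<forall>y\<in>snd ` Ls. snd (g y) = y"
    and gi: "\<forall>x\<in>Ls. g (snd x) = x" and gim: "g ` (snd ` Ls) = Ls"
    using g unfolding homeomorphism_def by auto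
  have cL: "connected Ls" using bl_connected[OF q(2)] by (simp add: Ls_def)
  have conn: "connected (snd ` Ls)"
    by (intro connected_continuous_image cL continuous_intros)
  have Icc: "{snd q..snd p0} \<subseteq> snd ` Ls"
    by (rule connected_contains_Icc[OF conn]) (use qL pL in auto)
  have "u (g (snd q)) = M"
  proof (rule prop_curve[OF loc])
    show "continuous_on {snd q..snd p0} g" using continuous_on_subset[OF gc Icc] .
    show "g ` {snd q..snd p0} \<subseteq> Om" using Icc gim q(5) Ls_def by blast
    show "\<forall>t\<in>{snd q..snd p0}. snd (g t) = t" using Icc gs by blast
    show "snd q \<le> snd p0" by (rule q(7))
    show "u (g (snd p0)) = M" using gi pL up by simp
    show "continuous_on Om u" using cu by (simp add: Om_def)
  qed auto
  then show "u q = M" using gi qL by simp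
qed

lemma neg_mat_mult: "(- H) *v v = - (H *v (v::real^'n))"
  by (simp add: matrix_vector_mult_def vec_eq_iff sum_negf)

lemma test_fun_neg:
  assumes "test_fun \<phi> Dx Hx Dt p"
  shows "test_fun (\<lambda>y s. - \<phi> y s) (\<lambda>y s. - Dx y s) (\<lambda>y s. - Hx y s) (\<lambda>y s. - Dt y s) p"
proof -
  obtain U where U: "open U" "p \<in> U"
    "\<forall>(y,s)\<in>U. ((\<lambda>z. \<phi> z s) has_derivative (\<lambda>v. Dx y s \<bullet> v)) (at y) \<and>
        ((\<lambda>z. Dx z s) has_derivative (\<lambda>v. Hx y s *v v)) (at y) \<and>
        ((\<lambda>r. \<phi> y r) has_real_derivative Dt y s) (at s)"
    "continuous_on U (\<lambda>(y,s). \<phi> y s)" "continuous_on U (\<lambda>(y,s). Dx y s)"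
    "continuous_on U (\<lambda>(y,s). Hx y s)" "continuous_on U (\<lambda>(y,s). Dt y s)"
    using assms unfolding test_fun_def by blast
  show ?thesis unfolding test_fun_def
  proof (intro exI[of _ U] conjI ballI)
    fix q assume "q \<in> U"
    then obtain y s where qq: "q = (y,s)" "(y,s) \<in> U" by (metis prod.collapse)
    have d: "((\<lambda>z. \<phi> z s) has_derivative (\<lambda>v. Dx y s \<bullet> v)) (at y)"
        "((\<lambda>z. Dx z s) has_derivative (\<lambda>v. Hx y s *v v)) (at y)"
        "((\<lambda>r. \<phi> y r) has_real_derivative Dt y s) (at s)" using U(3) qq by auto
    have "((\<lambda>z. - \<phi> z s) has_derivative (\<lambda>v. - (Dx y s \<bullet> v))) (at y)"
      using has_derivative_minus[OF d(1)] .
    moreover have "((\<lambda>z. - Dx z s) has_derivative (\<lambda>v. - (Hx y s *v v))) (at y)"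
      using has_derivative_minus[OF d(2)] .
    moreover have "((\<lambda>r. - \<phi> y r) has_real_derivative - Dt y s) (at s)"
      using DERIV_minus[OF d(3)] .
    ultimately show "case q of (y,s) \<Rightarrow> ((\<lambda>z. - \<phi> z s) has_derivative (\<lambda>v. - Dx y s \<bullet> v)) (at y) \<and>
        ((\<lambda>z. - Dx z s) has_derivative (\<lambda>v. - Hx y s *v v)) (at y) \<and>
        ((\<lambda>r. - \<phi> y r) has_real_derivative - Dt y s) (at s)"
      using qq by (simp add: neg_mat_mult)
  next
    show "continuous_on U (\<lambda>(y,s). - \<phi> y s)" using continuous_on_minus[OF U(4)] by (simp add: split_def)
    show "continuous_on U (\<lambda>(y,s). - Dx y s)" using continuous_on_minus[OF U(5)] by (simp add: split_def)
    show "continuous_on U (\<lambda>(y,s). - Hx y s)" using continuous_on_minus[OF U(6)] by (simp add: split_def)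
    show "continuous_on U (\<lambda>(y,s). - Dt y s)" using continuous_on_minus[OF U(7)] by (simp add: split_def)
  qed (use U in auto)
qed

lemma super_to_sub:
  assumes "visc_super F Om u"
  shows "visc_sub (\<lambda>x t X. - F x t (- X)) Om (\<lambda>q. - u q)"
  unfolding visc_sub_def
proof (intro allI impI)
  fix x0 t0 \<phi> Dx Hx Dt
  assume p: "(x0,t0) \<in> Om" and tf: "test_fun \<phi> Dx Hx Dt (x0,t0)"
    and touch: "\<exists>r>0. \<forall>(y,s)\<in>Om \<inter> ball (x0,t0) r. - u (y,s) - \<phi> y s \<le> - u (x0,t0) - \<phi> x0 t0"
  have tf2: "test_fun (\<lambda>y s. - \<phi> y s) (\<lambda>y s. - Dx y s) (\<lambda>y s. - Hx y s) (\<lambda>y s. - Dt y s) (x0,t0)"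
    by (rule test_fun_neg[OF tf])
  have touch2: "\<exists>r>0. \<forall>(y,s)\<in>Om \<inter> ball (x0,t0) r. u (y,s) - (- \<phi> y s) \<ge> u (x0,t0) - (- \<phi> x0 t0)"
  proof -
    obtain r where r: "r > 0" "\<forall>(y,s)\<in>Om \<inter> ball (x0,t0) r. - u (y,s) - \<phi> y s \<le> - u (x0,t0) - \<phi> x0 t0"
      using touch by blast
    show ?thesis
    proof (intro exI[of _ r] conjI ballI)
      fix q assume q: "q \<in> Om \<inter> ball (x0,t0) r"
      obtain y s where qq: "q = (y,s)" by fastforce
      have "- u (y,s) - \<phi> y s \<le> - u (x0,t0) - \<phi> x0 t0" using r(2) q qq by blast
      then show "case q of (y,s) \<Rightarrow> u (y,s) - (- \<phi> y s) \<ge> u (x0,t0) - (- \<phi> x0 t0)" using qq by simp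
    qed (use r in auto)
  qed
  have "F x0 t0 (- Hx x0 t0) - (- Dt x0 t0) \<le> 0"
    using assms p tf2 touch2 unfolding visc_super_def by blast
  then show "0 \<le> - F x0 t0 (- Hx x0 t0) - Dt x0 t0" by simp
qed



theorem theorem3p4:
  fixes D :: "((real^'n) \<times> real) set"
    and F :: "real^'n \<Rightarrow> real \<Rightarrow> real^'n^'n \<Rightarrow> real"
    and u :: "(real^'n) \<times> real \<Rightarrow> real"
    and lam Lam M t0 :: real and x0 :: "real^'n"
  assumes "open D" and "connected D"
    and "0 < lam" and "lam \<le> Lam"
    and "\<forall>(x,t)\<in>D. \<forall>X N. symmetric_mat X \<longrightarrow> symmetric_mat N \<longrightarrow> psd N \<longrightarrow>
            lam * trace N \<le> F x t (X + N) - F x t X \<and> F x t (X + N) - F x t X \<le> Lam * trace N"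
    and "\<forall>(x,t)\<in>D. F x t 0 = 0"
    and "continuous_on (D \<union> upper_base D) u"
    and "(x0,t0) \<in> D \<union> upper_base D"
    and "u (x0,t0) = M"
  shows "(visc_sub F (D \<union> upper_base D) u \<and> (\<forall>q\<in>D \<union> upper_base D. u q \<le> M)
            \<longrightarrow> (\<forall>q\<in>subordinate D (x0,t0). u q = M))
       \<and> (visc_super F (D \<union> upper_base D) u \<and> (\<forall>q\<in>D \<union> upper_base D. u q \<ge> M)
            \<longrightarrow> (\<forall>q\<in>subordinate D (x0,t0). u q = M))"
proof (intro conjI impI)
  assume a: "visc_sub F (D \<union> upper_base D) u \<and> (\<forall>q\<in>D \<union> upper_base D. u q \<le> M)"
  show "\<forall>q\<in>subordinate D (x0,t0). u q = M"
    using sub_case[OF assms(1) assms(3,4) assms(5,6,7,8,9)] a by blast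
next
  assume a: "visc_super F (D \<union> upper_base D) u \<and> (\<forall>q\<in>D \<union> upper_base D. u q \<ge> M)"
  define G where "G = (\<lambda>x t X. - F x t (- X))"
  have SG: "\<forall>(x,t)\<in>D. \<forall>X N. symmetric_mat X \<longrightarrow> symmetric_mat N \<longrightarrow> psd N \<longrightarrow>
            lam * trace N \<le> G x t (X + N) - G x t X \<and> G x t (X + N) - G x t X \<le> Lam * trace N"
  proof (intro ballI)
    fix p assume p: "p \<in> D"
    obtain x t where pp: "p = (x,t)" by fastforce
    have "\<forall>X N. symmetric_mat X \<longrightarrow> symmetric_mat N \<longrightarrow> psd N \<longrightarrow>
            lam * trace N \<le> G x t (X + N) - G x t X \<and> G x t (X + N) - G x t X \<le> Lam * trace N"
    proof (intro allI impI)
      fix X N :: "real^'n^'n" assume sX: "symmetric_mat X" and sN: "symmetric_mat N" and pN: "psd N"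
      define Y where "Y = - X - N"
      have sY: "symmetric_mat Y" unfolding Y_def using sym_diff[OF sym_diff[OF sym_zero sX] sN] by simp
      have "lam * trace N \<le> F x t (Y + N) - F x t Y \<and> F x t (Y + N) - F x t Y \<le> Lam * trace N"
        using assms(5) p pp sY sN pN by blast
      moreover have "Y + N = - X" "- (X + N) = Y" by (simp_all add: Y_def algebra_simps)
      ultimately show "lam * trace N \<le> G x t (X + N) - G x t X \<and> G x t (X + N) - G x t X \<le> Lam * trace N"
        by (simp add: G_def)
    qed
    then show "case p of (x,t) \<Rightarrow> \<forall>X N. symmetric_mat X \<longrightarrow> symmetric_mat N \<longrightarrow> psd N \<longrightarrow>
            lam * trace N \<le> G x t (X + N) - G x t X \<and> G x t (X + N) - G x t X \<le> Lam * trace N"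
      using pp by simp
  qed
  have G0: "\<forall>(x,t)\<in>D. G x t 0 = 0" using assms(6) by (simp add: G_def)
  have cv: "continuous_on (D \<union> upper_base D) (\<lambda>q. - u q)" using assms(7) by (intro continuous_intros)
  have vs: "visc_sub G (D \<union> upper_base D) (\<lambda>q. - u q)"
    unfolding G_def using super_to_sub a by blast
  have "\<forall>q\<in>subordinate D (x0,t0). - u q = - M"
    by (rule sub_case[OF assms(1) assms(3,4) SG G0 cv assms(8) _ vs]) (use assms(9) a in auto)
  then show "\<forall>q\<in>subordinate D (x0,t0). u q = M" by simp
qed


end
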